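(* Let $H=l_2$ be the real separable infinite-dimensional Hilbert space with zero $\theta$. Let $d\in H$ with $\|d\|=1$ and let $\gamma\in[0,\pi]$ with $\gamma\leqslant\arccos\frac14$. Then $C(-\tfrac12 d,\tfrac12 d,\gamma)\subset\overline{B}(\theta,1)$.
   Context: $\overline{B}(\theta,1)=\{x\in H:\|x\|\leqslant1\}$. For $x,y\in H$, $\angle(x,y)=\arccos\frac{\langle x,y\rangle}{\|x\|\,\|y\|}\in[0,\pi]$, with $\angle(x,y)=0$ if $x=\theta$ or $y=\theta$. For $s\ne e$ and $\gamma\in[0,\pi]$, the ommatidium is $C(s,e,\gamma)=\{x\in H:\ \|x-s\|\leqslant\|e-s\|\text{ and }\angle(x-s,e-s)\leqslant\gamma\}$. *)

theory Defs
  imports "HOL-Analysis.Analysis"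
begin

definition vangle :: "'a::real_inner \<Rightarrow> 'a \<Rightarrow> real" where
  "vangle x y = (if x = 0 \<or> y = 0 then 0 else arccos (inner x y / (norm x * norm y)))"

definition ommatidium :: "'a::real_inner \<Rightarrow> 'a \<Rightarrow> real \<Rightarrow> 'a set" where
  "ommatidium s e \<gamma> = {x. norm (x - s) \<le> norm (e - s) \<and> vangle (x - s) (e - s) \<le> \<gamma>}"

end

theory Submission
  imports Defs
begin

lemma h1: fixes a b :: real assumes "\<bar>a\<bar> \<le> b" "b > 0" shows "\<bar>a / b\<bar> \<le> 1"
  using assms by (simp add: abs_divide)
lemma h2: fixes a b :: real assumes "1/4 \<le> a / b" "b > 0" shows "b/4 \<le> a"
  using assms by (simp add: field_simps)

lemma h3: fixes t :: real shows "t^2 - t / 4 - 3/4 = (t - 1) * (t + 3/4)"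
  by (simp add: power2_eq_square field_simps)

theorem lemma12:
  fixes d :: "'a::{real_inner, complete_space}" and \<gamma> :: real
  assumes separable: "separable_space (euclidean :: 'a topology)"
    and inf_dim: "\<not> (\<exists>B :: 'a set. finite B \<and> span B = UNIV)"
    and d: "norm d = 1"
    and g0: "0 \<le> \<gamma>" and gpi: "\<gamma> \<le> pi"
    and g: "\<gamma> \<le> arccos (1/4)"
  shows "ommatidium (- (1/2) *\<^sub>R d) ((1/2) *\<^sub>R d) \<gamma> \<subseteq> cball 0 1"
proof
  fix x assume "x \<in> ommatidium (- (1/2) *\<^sub>R d) ((1/2) *\<^sub>R d) \<gamma>"
  define y where "y = x + (1/2) *\<^sub>R d"
  have ed: "(1/2) *\<^sub>R d - - (1/2) *\<^sub>R d = d" by (simp add: scaleR_2 [symmetric] algebra_simps)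
  have xs: "x - - (1/2) *\<^sub>R d = y" by (simp add: y_def)
  from \<open>x \<in> _\<close> have ny: "norm y \<le> 1" and ang: "vangle y d \<le> \<gamma>"
    unfolding ommatidium_def ed xs using d by (auto simp: y_def)
  have xy: "x = y - (1/2) *\<^sub>R d" by (simp add: y_def)
  have nx2: "(norm x)^2 = (norm y)^2 - inner y d + 1/4"
  proof -
    have dd: "inner d d = 1" using d by (simp add: power2_norm_eq_inner[symmetric])
    have e1: "inner (y - (1/2) *\<^sub>R d) (y - (1/2) *\<^sub>R d) = inner y y - inner y d + (1/4) * inner d d"
      unfolding inner_diff_left inner_diff_right inner_scaleR_left inner_scaleR_right inner_commute[of d y]
      by (simp add: field_simps)
    show ?thesis unfolding xy power2_norm_eq_inner e1 dd by simp
  qed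
  have key: "inner y d \<ge> norm y / 4"
  proof (cases "y = 0")
    case True then show ?thesis by simp
  next
    case False
    have d0: "d \<noteq> 0" using d by auto
    let ?c = "inner y d / (norm y * norm d)"
    have cs: "\<bar>inner y d\<bar> \<le> norm y * norm d" by (rule Cauchy_Schwarz_ineq2)
    have pos: "norm y * norm d > 0" using False d0 by simp
    have c1: "\<bar>?c\<bar> \<le> 1" by (rule h1[OF cs pos])
    have "arccos ?c \<le> arccos (1/4)" using ang g False d0 unfolding vangle_def by auto
    hence "1/4 \<le> ?c" using arccos_le_mono[of ?c "1/4"] c1 by simp
    from h2[OF this pos] show ?thesis using d by simp
  qed
  have "(norm x)^2 \<le> 1"
  proof -
    have "(norm y)^2 - norm y / 4 - 3/4 \<le> 0"
    proof -
      have "(norm y)^2 - norm y / 4 - 3/4 = (norm y - 1) * (norm y + 3/4)" by (rule h3)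
      also have "\<dots> \<le> 0" using ny by (intro mult_nonpos_nonneg) auto
      finally show ?thesis .
    qed
    thus ?thesis using nx2 key by linarith
  qed
  hence "norm x \<le> 1" by (simp add: power_le_one_iff abs_le_square_iff)
  thus "x \<in> cball 0 1" by simp
qed

end
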